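(* Let $\mathcal C$ be a pointed category with finite coproducts, $X,Y\in\mathcal C$, $A$ an abelian group, and $\varphi\colon\mathcal C(X,Y)\to A$ a function with $\varphi(0)=0$. Let $\bar\varphi\colon U_X(Y)\to A$ be its $\mathbb Z$-linear extension. Then $\varphi$ is quadratic if and only if $\bar\varphi$ factors through $t_2\colon U_X(Y)\to T_2U_X(Y)$.
   Context: Notation. $\vee$ is the coproduct, $r_1,r_2\colon Y\vee Y\to Y$ are the retractions, and $\nabla$ is the folding map. Functors. - $U_X\colon\mathcal C\to Ab$, $U_X(Z)=\mathbb Z[\mathcal C(X,Z)]/\mathbb Z\cdot0$, functorial by postcomposition. - For a reduced functor $F$: $cr_2F(Y,Y)=\ker(F(Y\vee Y)\to F(Y)\oplus F(Y))$, and $cr_3F(Y,Y,Y)=cr_2(cr_2F(-,Y))(Y,Y)$. - $T_2F(Y)=\mathrm{coker}(cr_3F(Y,Y,Y)\subseteq F(Y^{\vee3})\xrightarrow{F(\nabla^3)}F(Y))$, with projection $t_2$. - For a bireduced bifunctor $B$, $T_{11}B$ is the quotient of $B(Y,Y)$ by the images of $cr_2(B(-,Y))(Y,Y)$ under $B(\nabla,1)$ and of $cr_2(B(Y,-))(Y,Y)$ under $B(1,\nabla)$; $t_{11}$ is the projection. Quadratic maps. - The cross-effect $cr_2(\varphi)\colon cr_2U_X(Y,Y)\to A$ is the restriction to $cr_2U_X(Y,Y)\subseteq U_X(Y\vee Y)$ of the homomorphism determined by $\xi\mapsto\varphi(\nabla\xi)-\varphi(r_1\xi)-\varphi(r_2\xi)$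 for $\xi\in\mathcal C(X,Y\vee Y)$. - $\varphi$ is called quadratic if $cr_2(\varphi)$ factors through $t_{11}\colon cr_2U_X(Y,Y)\to T_{11}(cr_2U_X)(Y,Y)$. *)

theory Defs
  imports Main "HOL-Library.Function_Algebras"
begin

text \<open>Objects are the elements of type 'o, morphisms the elements of type 'm.
 Comp g f denotes g \<circ> f (defined when Dom g = Cod f).\<close>

record ('o, 'm) pcat =
  Dom  :: "'m \<Rightarrow> 'o"
  Cod  :: "'m \<Rightarrow> 'o"
  Comp :: "'m \<Rightarrow> 'm \<Rightarrow> 'm"
  Ident :: "'o \<Rightarrow> 'm"
  Zero :: "'o"
  Cop  :: "'o \<Rightarrow> 'o \<Rightarrow> 'o"
  In1  :: "'o \<Rightarrow> 'o \<Rightarrow> 'm"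
  In2  :: "'o \<Rightarrow> 'o \<Rightarrow> 'm"

definition hom :: "('o,'m) pcat \<Rightarrow> 'o \<Rightarrow> 'o \<Rightarrow> 'm set" where
  "hom C a b = {f. Dom C f = a \<and> Cod C f = b}"

definition pointed_cat_cop :: "('o,'m) pcat \<Rightarrow> bool" where
  "pointed_cat_cop C \<longleftrightarrow>
     (\<forall>f g. Dom C g = Cod C f \<longrightarrow>
        Dom C (Comp C g f) = Dom C f \<and> Cod C (Comp C g f) = Cod C g)
   \<and> (\<forall>f g h. Dom C g = Cod C f \<longrightarrow> Dom C h = Cod C g \<longrightarrow>
        Comp C h (Comp C g f) = Comp C (Comp C h g) f)
   \<and> (\<forall>a. Ident C a \<in> hom C a a)
   \<and> (\<forall>f. Comp C f (Ident C (Dom C f)) = f \<and> Comp C (Ident C (Cod C f)) f = f)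
   \<and> (\<forall>a. \<exists>!f. f \<in> hom C (Zero C) a)
   \<and> (\<forall>a. \<exists>!f. f \<in> hom C a (Zero C))
   \<and> (\<forall>a b. In1 C a b \<in> hom C a (Cop C a b) \<and> In2 C a b \<in> hom C b (Cop C a b))
   \<and> (\<forall>a b c f g. f \<in> hom C a c \<longrightarrow> g \<in> hom C b c \<longrightarrow>
        (\<exists>!h. h \<in> hom C (Cop C a b) c \<and> Comp C h (In1 C a b) = f \<and> Comp C h (In2 C a b) = g))"

definition zmor :: "('o,'m) pcat \<Rightarrow> 'o \<Rightarrow> 'o \<Rightarrow> 'm" where
  "zmor C a b = Comp C (THE h. h \<in> hom C (Zero C) b) (THE g. g \<in> hom C a (Zero C))"

definition copair :: "('o,'m) pcat \<Rightarrow> 'm \<Rightarrow> 'm \<Rightarrow> 'm" where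
  "copair C f g = (THE h. h \<in> hom C (Cop C (Dom C f) (Dom C g)) (Cod C f)
      \<and> Comp C h (In1 C (Dom C f) (Dom C g)) = f \<and> Comp C h (In2 C (Dom C f) (Dom C g)) = g)"

definition cmap :: "('o,'m) pcat \<Rightarrow> 'm \<Rightarrow> 'm \<Rightarrow> 'm" where
  "cmap C f g = copair C (Comp C (In1 C (Cod C f) (Cod C g)) f) (Comp C (In2 C (Cod C f) (Cod C g)) g)"

definition ret1 :: "('o,'m) pcat \<Rightarrow> 'o \<Rightarrow> 'o \<Rightarrow> 'm" where
  "ret1 C a b = copair C (Ident C a) (zmor C b a)"
definition ret2 :: "('o,'m) pcat \<Rightarrow> 'o \<Rightarrow> 'o \<Rightarrow> 'm" where
  "ret2 C a b = copair C (zmor C a b) (Ident C b)"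
definition fold2 :: "('o,'m) pcat \<Rightarrow> 'o \<Rightarrow> 'm" where
  "fold2 C Y = copair C (Ident C Y) (Ident C Y)"
definition fold3 :: "('o,'m) pcat \<Rightarrow> 'o \<Rightarrow> 'm" where
  "fold3 C Y = copair C (fold2 C Y) (Ident C Y)"

text \<open>U_X(Z) = Z[C(X,Z)] / Z\<cdot>0, represented by its canonical representatives:
 finitely supported integer functions on C(X,Z) - {0}.\<close>
definition UX :: "('o,'m) pcat \<Rightarrow> 'o \<Rightarrow> 'o \<Rightarrow> ('m \<Rightarrow> int) set" where
  "UX C X Z = {u. finite {f. u f \<noteq> 0} \<and>
      (\<forall>f. u f \<noteq> 0 \<longrightarrow> f \<in> hom C X Z \<and> f \<noteq> zmor C X Z)}"

text \<open>U_X(f) for f : Z \<rightarrow> W (postcomposition, then discarding the class of 0).\<close>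
definition Umap :: "('o,'m) pcat \<Rightarrow> 'o \<Rightarrow> 'm \<Rightarrow> ('m \<Rightarrow> int) \<Rightarrow> ('m \<Rightarrow> int)" where
  "Umap C X f u = (\<lambda>g. if g \<in> hom C X (Cod C f) \<and> g \<noteq> zmor C X (Cod C f)
       then (\<Sum>h\<in>{h. u h \<noteq> 0 \<and> Comp C f h = g}. u h) else 0)"

definition cr2U :: "('o,'m) pcat \<Rightarrow> 'o \<Rightarrow> 'o \<Rightarrow> ('m \<Rightarrow> int) set" where
  "cr2U C X Y = {u \<in> UX C X (Cop C Y Y).
      Umap C X (ret1 C Y Y) u = 0 \<and> Umap C X (ret2 C Y Y) u = 0}"

text \<open>cr_3 U_X(Y,Y,Y) = cr_2(cr_2 U_X(-,Y))(Y,Y) \<subseteq> U_X((Y \<or> Y) \<or> Y) = U_X(Y^{\<or>3}).\<close>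
definition cr3U :: "('o,'m) pcat \<Rightarrow> 'o \<Rightarrow> 'o \<Rightarrow> ('m \<Rightarrow> int) set" where
  "cr3U C X Y = {u \<in> UX C X (Cop C (Cop C Y Y) Y).
      Umap C X (ret1 C (Cop C Y Y) Y) u = 0 \<and> Umap C X (ret2 C (Cop C Y Y) Y) u = 0 \<and>
      Umap C X (cmap C (ret1 C Y Y) (Ident C Y)) u = 0 \<and>
      Umap C X (cmap C (ret2 C Y Y) (Ident C Y)) u = 0}"

text \<open>cr_2(cr_2 U_X(Y,-))(Y,Y) \<subseteq> U_X(Y \<or> (Y \<or> Y)).\<close>
definition cr3U_right :: "('o,'m) pcat \<Rightarrow> 'o \<Rightarrow> 'o \<Rightarrow> ('m \<Rightarrow> int) set" where
  "cr3U_right C X Y = {u \<in> UX C X (Cop C Y (Cop C Y Y)).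
      Umap C X (ret1 C Y (Cop C Y Y)) u = 0 \<and> Umap C X (ret2 C Y (Cop C Y Y)) u = 0 \<and>
      Umap C X (cmap C (Ident C Y) (ret1 C Y Y)) u = 0 \<and>
      Umap C X (cmap C (Ident C Y) (ret2 C Y Y)) u = 0}"

definition qclass :: "'b::ab_group_add set \<Rightarrow> 'b set \<Rightarrow> 'b \<Rightarrow> 'b set" where
  "qclass G N u = {v \<in> G. u - v \<in> N}"

definition factors_through_quot ::
    "'b::ab_group_add set \<Rightarrow> 'b set \<Rightarrow> ('b \<Rightarrow> 'a::ab_group_add) \<Rightarrow> bool" where
  "factors_through_quot G N h \<longleftrightarrow> (\<exists>\<psi>.
      (\<forall>u\<in>G. \<psi> (qclass G N u) = h u) \<and>
      (\<forall>u\<in>G. \<forall>v\<in>G. \<psi> (qclass G N (u + v)) = \<psi> (qclass G N u) + \<psi> (qclass G N v)))"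

text \<open>Kernel of t_2 : U_X(Y) \<rightarrow> T_2 U_X(Y): image of cr_3 U_X(Y,Y,Y) under U_X(\<nabla>^3).\<close>
definition T2ker :: "('o,'m) pcat \<Rightarrow> 'o \<Rightarrow> 'o \<Rightarrow> ('m \<Rightarrow> int) set" where
  "T2ker C X Y = Umap C X (fold3 C Y) ` cr3U C X Y"

text \<open>Kernel of t_11 : cr_2U_X(Y,Y) \<rightarrow> T_11(cr_2U_X)(Y,Y): subgroup generated by the images
 of cr_2(B(-,Y))(Y,Y) under B(\<nabla>,1) and of cr_2(B(Y,-))(Y,Y) under B(1,\<nabla>)
 (a sum of two subgroups).\<close>
definition T11ker :: "('o,'m) pcat \<Rightarrow> 'o \<Rightarrow> 'o \<Rightarrow> ('m \<Rightarrow> int) set" where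
  "T11ker C X Y = {a + b | a b.
      a \<in> Umap C X (cmap C (fold2 C Y) (Ident C Y)) ` cr3U C X Y \<and>
      b \<in> Umap C X (cmap C (Ident C Y) (fold2 C Y)) ` cr3U_right C X Y}"

definition zsmul :: "int \<Rightarrow> 'a::ab_group_add \<Rightarrow> 'a" where
  "zsmul k a = (\<Sum>i<nat k. a) - (\<Sum>i<nat (- k). a)"

definition linext :: "('o,'m) pcat \<Rightarrow> 'o \<Rightarrow> 'o \<Rightarrow> ('m \<Rightarrow> 'a::ab_group_add) \<Rightarrow> ('m \<Rightarrow> int) \<Rightarrow> 'a" where
  "linext C X Y \<phi> u = (\<Sum>f\<in>{f. u f \<noteq> 0}. zsmul (u f) (\<phi> f))"

text \<open>cr_2(\<phi>): homomorphism U_X(Y \<or> Y) \<rightarrow> A, \<xi> \<mapsto> \<phi>(\<nabla>\<xi>) - \<phi>(r_1\<xi>) - \<phi>(r_2\<xi>)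
 (to be restricted to cr_2U_X(Y,Y)).\<close>
definition cr2phi :: "('o,'m) pcat \<Rightarrow> 'o \<Rightarrow> 'o \<Rightarrow> ('m \<Rightarrow> 'a::ab_group_add) \<Rightarrow> ('m \<Rightarrow> int) \<Rightarrow> 'a" where
  "cr2phi C X Y \<phi> u = (\<Sum>\<xi>\<in>{\<xi>. u \<xi> \<noteq> 0}. zsmul (u \<xi>)
      (\<phi> (Comp C (fold2 C Y) \<xi>) - \<phi> (Comp C (ret1 C Y Y) \<xi>) - \<phi> (Comp C (ret2 C Y Y) \<xi>)))"

definition quadratic :: "('o,'m) pcat \<Rightarrow> 'o \<Rightarrow> 'o \<Rightarrow> ('m \<Rightarrow> 'a::ab_group_add) \<Rightarrow> bool" where
  "quadratic C X Y \<phi> \<longleftrightarrow> factors_through_quot (cr2U C X Y) (T11ker C X Y) (cr2phi C X Y \<phi>)"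

end

theory Submission
  imports Defs
begin


locale pcc =
  fixes C :: "('o,'m) pcat"
  assumes ax: "pointed_cat_cop C"
begin

lemma AX: "(\<forall>f g. Dom C g = Cod C f \<longrightarrow>
        Dom C (Comp C g f) = Dom C f \<and> Cod C (Comp C g f) = Cod C g)"
   "(\<forall>f g h. Dom C g = Cod C f \<longrightarrow> Dom C h = Cod C g \<longrightarrow>
        Comp C h (Comp C g f) = Comp C (Comp C h g) f)"
   "(\<forall>a. Ident C a \<in> hom C a a)"
   "(\<forall>f. Comp C f (Ident C (Dom C f)) = f \<and> Comp C (Ident C (Cod C f)) f = f)"
   "(\<forall>a. \<exists>!f. f \<in> hom C (Zero C) a)"
   "(\<forall>a. \<exists>!f. f \<in> hom C a (Zero C))"
   "(\<forall>a b. In1 C a b \<in> hom C a (Cop C a b) \<and> In2 C a b \<in> hom C b (Cop C a b))"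
   "(\<forall>a b c f g. f \<in> hom C a c \<longrightarrow> g \<in> hom C b c \<longrightarrow>
        (\<exists>!h. h \<in> hom C (Cop C a b) c \<and> Comp C h (In1 C a b) = f \<and> Comp C h (In2 C a b) = g))"
  using ax unfolding pointed_cat_cop_def apply - by (elim conjE, assumption)+

lemma ax_comp: "Dom C g = Cod C f \<Longrightarrow> Dom C (Comp C g f) = Dom C f \<and> Cod C (Comp C g f) = Cod C g"
  using AX(1) by blast

lemma dom_comp: "Dom C g = Cod C f \<Longrightarrow> Dom C (Comp C g f) = Dom C f"
  using ax_comp by blast
lemma cod_comp: "Dom C g = Cod C f \<Longrightarrow> Cod C (Comp C g f) = Cod C g"
  using ax_comp by blast

lemma assoc: "Dom C g = Cod C f \<Longrightarrow> Dom C h = Cod C g \<Longrightarrow>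
   Comp C h (Comp C g f) = Comp C (Comp C h g) f"
  using AX(2) by blast

lemma Ident_hom: "Ident C a \<in> hom C a a"
  using AX(3) by blast
lemma Ident_dom: "Dom C (Ident C a) = a" and Ident_cod: "Cod C (Ident C a) = a"
  using Ident_hom unfolding hom_def by auto

lemma idl: "Cod C f = b \<Longrightarrow> Comp C (Ident C b) f = f"
  using AX(4) by blast
lemma idr: "Dom C f = a \<Longrightarrow> Comp C f (Ident C a) = f"
  using AX(4) by blast

lemma init_ex: "\<exists>!f. f \<in> hom C (Zero C) a"
  using AX(5) by blast
lemma term_ex: "\<exists>!f. f \<in> hom C a (Zero C)"
  using AX(6) by blast

lemma init_hom: "(THE h. h \<in> hom C (Zero C) b) \<in> hom C (Zero C) b"
  using theI'[OF init_ex] .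
lemma term_hom: "(THE h. h \<in> hom C a (Zero C)) \<in> hom C a (Zero C)"
  using theI'[OF term_ex] .

lemma zmor_dom: "Dom C (zmor C a b) = a" and zmor_cod: "Cod C (zmor C a b) = b"
  using init_hom[of b] term_hom[of a] unfolding zmor_def hom_def
  by (auto simp: dom_comp cod_comp)

lemma zmor_left: "Dom C g = b \<Longrightarrow> Comp C g (zmor C a b) = zmor C a (Cod C g)"
proof -
  assume g: "Dom C g = b"
  let ?i = "THE h. h \<in> hom C (Zero C) b" and ?t = "THE h. h \<in> hom C a (Zero C)"
  have i: "?i \<in> hom C (Zero C) b" by (rule init_hom)
  have t: "?t \<in> hom C a (Zero C)" by (rule term_hom)
  have "Comp C g (Comp C ?i ?t) = Comp C (Comp C g ?i) ?t"
    using i t g by (intro assoc) (auto simp: hom_def)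
  moreover have "Comp C g ?i = (THE h. h \<in> hom C (Zero C) (Cod C g))"
    using i g by (intro the1_equality[OF init_ex, symmetric]) (auto simp: hom_def dom_comp cod_comp)
  ultimately show ?thesis unfolding zmor_def by simp
qed

lemma zmor_right: "Cod C f = a \<Longrightarrow> Comp C (zmor C a b) f = zmor C (Dom C f) b"
proof -
  assume f: "Cod C f = a"
  let ?i = "THE h. h \<in> hom C (Zero C) b" and ?t = "THE h. h \<in> hom C a (Zero C)"
  have i: "?i \<in> hom C (Zero C) b" by (rule init_hom)
  have t: "?t \<in> hom C a (Zero C)" by (rule term_hom)
  have "Comp C (Comp C ?i ?t) f = Comp C ?i (Comp C ?t f)"
    using i t f by (intro assoc[symmetric]) (auto simp: hom_def)
  moreover have "Comp C ?t f = (THE h. h \<in> hom C (Dom C f) (Zero C))"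
    using t f by (intro the1_equality[OF term_ex, symmetric]) (auto simp: hom_def dom_comp cod_comp)
  ultimately show ?thesis unfolding zmor_def by simp
qed

lemma In_hom: "In1 C a b \<in> hom C a (Cop C a b)" "In2 C a b \<in> hom C b (Cop C a b)"
  using AX(7) by blast+
lemma In1_dom: "Dom C (In1 C a b) = a" and In1_cod: "Cod C (In1 C a b) = Cop C a b"
  and In2_dom: "Dom C (In2 C a b) = b" and In2_cod: "Cod C (In2 C a b) = Cop C a b"
  using In_hom unfolding hom_def by auto

lemma cop_ex: "f \<in> hom C a c \<Longrightarrow> g \<in> hom C b c \<Longrightarrow>
   (\<exists>!h. h \<in> hom C (Cop C a b) c \<and> Comp C h (In1 C a b) = f \<and> Comp C h (In2 C a b) = g)"
  using AX(8) by blast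

lemma copair_prop: "Cod C f = Cod C g \<Longrightarrow>
   copair C f g \<in> hom C (Cop C (Dom C f) (Dom C g)) (Cod C f) \<and>
   Comp C (copair C f g) (In1 C (Dom C f) (Dom C g)) = f \<and>
   Comp C (copair C f g) (In2 C (Dom C f) (Dom C g)) = g"
  unfolding copair_def
  by (rule theI'[OF cop_ex]) (auto simp: hom_def)

lemma copair_unique: "Cod C f = Cod C g \<Longrightarrow> h \<in> hom C (Cop C (Dom C f) (Dom C g)) (Cod C f) \<Longrightarrow>
   Comp C h (In1 C (Dom C f) (Dom C g)) = f \<Longrightarrow> Comp C h (In2 C (Dom C f) (Dom C g)) = g \<Longrightarrow>
   h = copair C f g"
  unfolding copair_def
  by (rule the1_equality[OF cop_ex, symmetric]) (auto simp: hom_def)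

lemma dom_copair: "Cod C f = Cod C g \<Longrightarrow> Dom C (copair C f g) = Cop C (Dom C f) (Dom C g)"
  using copair_prop unfolding hom_def by blast
lemma cod_copair: "Cod C f = Cod C g \<Longrightarrow> Cod C (copair C f g) = Cod C f"
  using copair_prop unfolding hom_def by blast
lemma copair_In1: "Dom C f = a \<Longrightarrow> Dom C g = b \<Longrightarrow> Cod C f = Cod C g \<Longrightarrow>
   Comp C (copair C f g) (In1 C a b) = f"
  using copair_prop by blast
lemma copair_In2: "Dom C f = a \<Longrightarrow> Dom C g = b \<Longrightarrow> Cod C f = Cod C g \<Longrightarrow>
   Comp C (copair C f g) (In2 C a b) = g"
  using copair_prop by blast

lemma comp_copair: "Dom C k = Cod C f \<Longrightarrow> Cod C f = Cod C g \<Longrightarrow>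
   Comp C k (copair C f g) = copair C (Comp C k f) (Comp C k g)"
proof -
  assume k: "Dom C k = Cod C f" and fg: "Cod C f = Cod C g"
  have dc: "Dom C (copair C f g) = Cop C (Dom C f) (Dom C g)" "Cod C (copair C f g) = Cod C f"
    using dom_copair cod_copair fg by auto
  show ?thesis
  proof (rule copair_unique)
    show "Cod C (Comp C k f) = Cod C (Comp C k g)" using k fg by (simp add: cod_comp)
    show "Comp C k (copair C f g) \<in> hom C (Cop C (Dom C (Comp C k f)) (Dom C (Comp C k g))) (Cod C (Comp C k f))"
      using k fg dc by (simp add: hom_def dom_comp cod_comp)
    show "Comp C (Comp C k (copair C f g)) (In1 C (Dom C (Comp C k f)) (Dom C (Comp C k g))) = Comp C k f"
      using k fg dc by (simp add: dom_comp assoc[symmetric] In1_cod copair_In1)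
    show "Comp C (Comp C k (copair C f g)) (In2 C (Dom C (Comp C k f)) (Dom C (Comp C k g))) = Comp C k g"
      using k fg dc by (simp add: dom_comp assoc[symmetric] In2_cod copair_In2)
  qed
qed

lemma copair_In_Id: "copair C (In1 C a b) (In2 C a b) = Ident C (Cop C a b)"
  by (rule copair_unique[symmetric])
     (auto simp: hom_def In1_dom In1_cod In2_dom In2_cod Ident_dom Ident_cod idl)

lemma copair_zmor: "copair C (zmor C a c) (zmor C b c) = zmor C (Cop C a b) c"
  by (rule copair_unique[symmetric])
     (auto simp: hom_def zmor_dom zmor_cod zmor_right In1_dom In1_cod In2_dom In2_cod)

lemmas cat_simps = dom_comp cod_comp assoc Ident_dom Ident_cod idl idr zmor_dom zmor_cod
  zmor_left zmor_right In1_dom In1_cod In2_dom In2_cod dom_copair cod_copair copair_In1 copair_In2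
  comp_copair copair_In_Id copair_zmor

definition alpha :: "'o \<Rightarrow> 'm" where
  "alpha Y = copair C (Comp C (In1 C (Cop C Y Y) Y) (In1 C Y Y))
      (copair C (Comp C (In1 C (Cop C Y Y) Y) (In2 C Y Y)) (In2 C (Cop C Y Y) Y))"

lemmas unf = fold2_def fold3_def ret1_def ret2_def cmap_def alpha_def

lemma E1: "Comp C (fold2 C Y) (cmap C (fold2 C Y) (Ident C Y)) = fold3 C Y"
  unfolding unf by (simp add: cat_simps)
lemma E2: "Comp C (ret1 C Y Y) (cmap C (fold2 C Y) (Ident C Y)) = Comp C (fold2 C Y) (ret1 C (Cop C Y Y) Y)"
  unfolding unf by (simp add: cat_simps)
lemma E3: "Comp C (ret2 C Y Y) (cmap C (fold2 C Y) (Ident C Y)) = ret2 C (Cop C Y Y) Y"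
  unfolding unf by (simp add: cat_simps)
lemma E4: "Comp C (ret1 C Y Y) (cmap C (Ident C Y) (fold2 C Y)) = ret1 C Y (Cop C Y Y)"
  unfolding unf by (simp add: cat_simps)
lemma E5: "Comp C (ret2 C Y Y) (cmap C (Ident C Y) (fold2 C Y)) = Comp C (fold2 C Y) (ret2 C Y (Cop C Y Y))"
  unfolding unf by (simp add: cat_simps)
lemma E7: "Comp C (fold2 C Y) (cmap C (Ident C Y) (fold2 C Y)) = Comp C (fold3 C Y) (alpha Y)"
  unfolding unf by (simp add: cat_simps)
lemma E8: "Comp C (ret1 C (Cop C Y Y) Y) (alpha Y) = cmap C (Ident C Y) (ret1 C Y Y)"
  unfolding unf by (simp add: cat_simps)
lemma E9: "Comp C (ret2 C (Cop C Y Y) Y) (alpha Y) = Comp C (ret2 C Y Y) (ret2 C Y (Cop C Y Y))"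
  unfolding unf by (simp add: cat_simps)
lemma E10: "Comp C (cmap C (ret1 C Y Y) (Ident C Y)) (alpha Y) = cmap C (Ident C Y) (ret2 C Y Y)"
  unfolding unf by (simp add: cat_simps)
lemma E11: "Comp C (cmap C (ret2 C Y Y) (Ident C Y)) (alpha Y) = ret2 C Y (Cop C Y Y)"
  unfolding unf by (simp add: cat_simps)
end



lemma zsmul_0[simp]: "zsmul 0 a = 0" by (simp add: zsmul_def)
lemma zsmul_zero[simp]: "zsmul k 0 = 0" by (simp add: zsmul_def)
lemma zsmul_add_right: "zsmul k (a + b) = zsmul k a + zsmul k (b::'a::ab_group_add)"
  by (simp add: zsmul_def sum.distrib algebra_simps)
lemma zsmul_diff_right: "zsmul k (a - b) = zsmul k a - zsmul k (b::'a::ab_group_add)"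
  by (simp add: zsmul_def sum_subtractf algebra_simps)

lemma zsmul_plus1: "zsmul (k + 1) a = zsmul k a + (a::'a::ab_group_add)"
proof (cases "k \<ge> 0")
  case True
  then have "nat (k+1) = Suc (nat k)" "nat (-(k+1)) = 0" "nat (-k) = 0" by auto
  then show ?thesis by (simp add: zsmul_def)
next
  case False
  define m where "m = nat (-(k+1))"
  have m: "nat (-k) = Suc m" "nat (-(k+1)) = m" using False unfolding m_def by auto
  have "nat (k+1) = 0" "nat k = 0" using False by auto
  with m show ?thesis by (simp add: zsmul_def)
qed

lemma zsmul_add_left: "zsmul (k + l) a = zsmul k a + zsmul l (a::'a::ab_group_add)"
proof (induction l rule: int_induct[where k=0])
  case base then show ?case by simp
next
  case (step1 i)
  have "zsmul (k + (i+1)) a = zsmul (k + i + 1) a" by (simp add: algebra_simps)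
  also have "\<dots> = zsmul (k+i) a + a" by (rule zsmul_plus1)
  finally show ?case using step1 zsmul_plus1[of i a] by (simp add: algebra_simps)
next
  case (step2 i)
  have A: "zsmul (k + i) a = zsmul (k + (i - 1)) a + a" using zsmul_plus1[of "k + (i - 1)" a] by simp
  have B: "zsmul i a = zsmul (i - 1) a + a" using zsmul_plus1[of "i - 1" a] by simp
  from step2 A B show ?case by (simp add: algebra_simps)
qed

lemma zsmul_sum_left: "zsmul (\<Sum>x\<in>S. f x) a = (\<Sum>x\<in>S. zsmul (f x) (a::'a::ab_group_add))"
  by (induction S rule: infinite_finite_induct) (auto simp: zsmul_add_left)

lemma zsmul_int_one: "zsmul k (1::int) = k"
proof (induction k rule: int_induct[where k=0])
  case base then show ?case by simp
next
  case (step1 i) then show ?case by (simp add: zsmul_plus1)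
next
  case (step2 i) then show ?case using zsmul_plus1[of "i - 1" "1::int"] by simp
qed

definition lin :: "('m \<Rightarrow> 'a::ab_group_add) \<Rightarrow> ('m \<Rightarrow> int) \<Rightarrow> 'a" where
  "lin \<psi> u = (\<Sum>h\<in>{h. u h \<noteq> 0}. zsmul (u h) (\<psi> h))"

lemma lin_superset: "finite S \<Longrightarrow> {h. u h \<noteq> 0} \<subseteq> S \<Longrightarrow> lin \<psi> u = (\<Sum>h\<in>S. zsmul (u h) (\<psi> h))"
  unfolding lin_def by (rule sum.mono_neutral_left) auto

lemma lin_add: "finite {h. u h \<noteq> 0} \<Longrightarrow> finite {h. v h \<noteq> 0} \<Longrightarrow> lin \<psi> (u + v) = lin \<psi> u + lin \<psi> v"
proof -
  assume fu: "finite {h. u h \<noteq> 0}" and fv: "finite {h. v h \<noteq> 0}"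
  let ?S = "{h. u h \<noteq> 0} \<union> {h. v h \<noteq> 0}"
  have "lin \<psi> (u + v) = (\<Sum>h\<in>?S. zsmul ((u+v) h) (\<psi> h))"
    by (rule lin_superset) (use fu fv in auto)
  also have "\<dots> = (\<Sum>h\<in>?S. zsmul (u h) (\<psi> h)) + (\<Sum>h\<in>?S. zsmul (v h) (\<psi> h))"
    by (simp add: zsmul_add_left sum.distrib)
  also have "\<dots> = lin \<psi> u + lin \<psi> v"
    by (subst (1 2) lin_superset[where S="?S"]) (use fu fv in auto)
  finally show ?thesis .
qed

lemma lin_zero[simp]: "lin \<psi> 0 = 0" by (simp add: lin_def)

lemma lin_diff_fun: "lin (\<lambda>h. \<psi>1 h - \<psi>2 h) u = lin \<psi>1 u - lin \<psi>2 u"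
  by (simp add: lin_def zsmul_diff_right sum_subtractf)

lemma lin_cong: "(\<And>h. u h \<noteq> 0 \<Longrightarrow> \<psi>1 h = \<psi>2 h) \<Longrightarrow> lin \<psi>1 u = lin \<psi>2 u"
  by (simp add: lin_def)

definition grp :: "'b::ab_group_add set \<Rightarrow> bool" where
  "grp S \<longleftrightarrow> 0 \<in> S \<and> (\<forall>x\<in>S. \<forall>y\<in>S. x + y \<in> S) \<and> (\<forall>x\<in>S. - x \<in> S)"

lemma ftq:
  assumes G: "grp G" and N: "grp N" and NG: "N \<subseteq> G"
    and h: "\<And>u v. u \<in> G \<Longrightarrow> v \<in> G \<Longrightarrow> h (u + v) = h u + h v"
  shows "factors_through_quot G N h \<longleftrightarrow> (\<forall>n\<in>N. h n = 0)"
proof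
  have h0: "h 0 = 0" using h[of 0 0] G unfolding grp_def by simp
  assume "factors_through_quot G N h"
  then obtain \<psi> where p: "\<forall>u\<in>G. \<psi> (qclass G N u) = h u"
    unfolding factors_through_quot_def by blast
  show "\<forall>n\<in>N. h n = 0"
  proof
    fix n assume n: "n \<in> N"
    have "qclass G N n = qclass G N 0"
      unfolding qclass_def
    proof (intro Collect_cong conj_cong refl)
      fix v assume "v \<in> G"
      show "n - v \<in> N \<longleftrightarrow> 0 - v \<in> N"
      proof
        assume "n - v \<in> N"
        then have "(n - v) + - n \<in> N" using N n unfolding grp_def by blast
        then show "0 - v \<in> N" by simp
      next
        assume "0 - v \<in> N"
        then have "n + (0 - v) \<in> N" using N n unfolding grp_def by blast
        then show "n - v \<in> N" by simp
      qed
    qed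
    moreover have "n \<in> G" "0 \<in> G" using n NG G unfolding grp_def by auto
    ultimately show "h n = 0" using p h0 by metis
  qed
next
  assume van: "\<forall>n\<in>N. h n = 0"
  define \<psi> where "\<psi> S = h (SOME v. v \<in> S)" for S
  have key: "\<psi> (qclass G N u) = h u" if u: "u \<in> G" for u
  proof -
    have "u \<in> qclass G N u" using u N unfolding qclass_def grp_def by simp
    then have "(SOME v. v \<in> qclass G N u) \<in> qclass G N u" by (rule someI)
    then obtain v where v: "v = (SOME v. v \<in> qclass G N u)" "v \<in> G" "u - v \<in> N"
      unfolding qclass_def by blast
    have "h u = h (v + (u - v))" by simp
    also have "\<dots> = h v + h (u - v)" using v NG by (intro h) auto
    also have "\<dots> = h v" using van v by simp
    finally show ?thesis using v unfolding \<psi>_def by simp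
  qed
  show "factors_through_quot G N h"
    unfolding factors_through_quot_def
  proof (intro exI conjI ballI)
    fix u assume "u \<in> G" then show "\<psi> (qclass G N u) = h u" by (rule key)
  next
    fix u v assume "u \<in> G" "v \<in> G"
    moreover have "u + v \<in> G" using G calculation unfolding grp_def by blast
    ultimately show "\<psi> (qclass G N (u + v)) = \<psi> (qclass G N u) + \<psi> (qclass G N v)"
      using key h by simp
  qed
qed




context pcc
begin

lemma typs:
  "Dom C (fold2 C Y) = Cop C Y Y" "Cod C (fold2 C Y) = Y"
  "Dom C (fold3 C Y) = Cop C (Cop C Y Y) Y" "Cod C (fold3 C Y) = Y"
  "Dom C (ret1 C a b) = Cop C a b" "Cod C (ret1 C a b) = a"
  "Dom C (ret2 C a b) = Cop C a b" "Cod C (ret2 C a b) = b"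
  "Dom C (alpha Y) = Cop C Y (Cop C Y Y)" "Cod C (alpha Y) = Cop C (Cop C Y Y) Y"
  "Dom C (cmap C f g) = Cop C (Dom C f) (Dom C g)" "Cod C (cmap C f g) = Cop C (Cod C f) (Cod C g)"
  by (simp_all add: unf cat_simps)

lemma UX_fin: "u \<in> UX C X Z \<Longrightarrow> finite {h. u h \<noteq> 0}"
  unfolding UX_def by blast
lemma UX_hom: "u \<in> UX C X Z \<Longrightarrow> u h \<noteq> 0 \<Longrightarrow> Dom C h = X \<and> Cod C h = Z \<and> h \<noteq> zmor C X Z"
  unfolding UX_def hom_def by blast

lemma Umap_eval: "finite {h. u h \<noteq> 0} \<Longrightarrow> Umap C X f u g =
   (if g \<in> hom C X (Cod C f) \<and> g \<noteq> zmor C X (Cod C f)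
    then lin (\<lambda>h. if Comp C f h = g then 1 else 0) u else 0)"
proof -
  assume fin: "finite {h. u h \<noteq> 0}"
  have "(\<Sum>h\<in>{h. u h \<noteq> 0 \<and> Comp C f h = g}. u h) = (\<Sum>h\<in>{h. u h \<noteq> 0}. if Comp C f h = g then u h else 0)"
  proof -
    have "{h. u h \<noteq> 0 \<and> Comp C f h = g} = {h \<in> {h. u h \<noteq> 0}. Comp C f h = g}" by auto
    then show ?thesis using sum.inter_filter[OF fin, of u "\<lambda>h. Comp C f h = g"] by simp
  qed
  also have "\<dots> = lin (\<lambda>h. if Comp C f h = g then 1 else 0) u"
    unfolding lin_def by (rule sum.cong) (auto simp: zsmul_int_one)
  finally show ?thesis unfolding Umap_def by simp
qed

lemma fin_add: "finite {h. u h \<noteq> 0} \<Longrightarrow> finite {h. v h \<noteq> 0} \<Longrightarrow> finite {h. (u + v) h \<noteq> (0::int)}"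
  by (rule finite_subset[of _ "{h. u h \<noteq> 0} \<union> {h. v h \<noteq> 0}"]) auto

lemma Umap_add: assumes a: "finite {h. u h \<noteq> 0}" and b: "finite {h. v h \<noteq> 0}" shows
   "Umap C X f (u + v) = Umap C X f u + Umap C X f v"
proof -
  have L: "\<And>\<psi>. lin \<psi> (\<lambda>h. u h + v h) = lin \<psi> u + lin \<psi> v"
    using lin_add[OF a b] by (simp add: plus_fun_def)
  show ?thesis
    by (rule ext) (simp add: Umap_eval[OF fin_add[OF a b]] Umap_eval[OF a] Umap_eval[OF b] L)
qed

lemma Umap_zero[simp]: "Umap C X f 0 = 0"
  by (rule ext) (simp add: Umap_def)

lemma Umap_uminus: "finite {h. u h \<noteq> 0} \<Longrightarrow> Umap C X f (- u) = - Umap C X f u"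
proof -
  assume fin: "finite {h. u h \<noteq> 0}"
  have fin2: "finite {h. (- u) h \<noteq> 0}" using fin by simp
  have "Umap C X f (u + - u) = Umap C X f u + Umap C X f (- u)"
    using Umap_add[OF fin fin2] .
  then show ?thesis by (simp add: eq_neg_iff_add_eq_0 add.commute)
qed

lemma UX_grp: "grp (UX C X Z)"
  unfolding grp_def
proof (intro conjI ballI)
  show "0 \<in> UX C X Z" by (simp add: UX_def)
next
  fix x y assume x: "x \<in> UX C X Z" and y: "y \<in> UX C X Z"
  have "finite {h. (x + y) h \<noteq> 0}" using fin_add[OF UX_fin[OF x] UX_fin[OF y]] .
  moreover have "\<forall>f. (x + y) f \<noteq> 0 \<longrightarrow> f \<in> hom C X Z \<and> f \<noteq> zmor C X Z"
  proof (intro allI impI)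
    fix f assume "(x + y) f \<noteq> 0"
    then have "x f \<noteq> 0 \<or> y f \<noteq> 0" by auto
    then show "f \<in> hom C X Z \<and> f \<noteq> zmor C X Z" using x y unfolding UX_def by blast
  qed
  ultimately show "x + y \<in> UX C X Z" unfolding UX_def by blast
next
  fix x assume "x \<in> UX C X Z" then show "- x \<in> UX C X Z" unfolding UX_def by auto
qed

lemma Umap_supp: "Umap C X f u g \<noteq> 0 \<Longrightarrow> \<exists>h. u h \<noteq> 0 \<and> Comp C f h = g"
proof (rule ccontr)
  assume "Umap C X f u g \<noteq> 0" "\<not> (\<exists>h. u h \<noteq> 0 \<and> Comp C f h = g)"
  then have E: "{h. u h \<noteq> 0 \<and> Comp C f h = g} = {}" by blast
  have "Umap C X f u g = 0" unfolding Umap_def by (simp only: E sum.empty if_cancel)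
  with \<open>Umap C X f u g \<noteq> 0\<close> show False by simp
qed

lemma Umap_UX: "u \<in> UX C X Z \<Longrightarrow> Dom C f = Z \<Longrightarrow> Umap C X f u \<in> UX C X (Cod C f)"
proof -
  assume u: "u \<in> UX C X Z" and f: "Dom C f = Z"
  have "{g. Umap C X f u g \<noteq> 0} \<subseteq> (\<lambda>h. Comp C f h) ` {h. u h \<noteq> 0}"
    using Umap_supp by blast
  then have "finite {g. Umap C X f u g \<noteq> 0}"
    using finite_surj[OF UX_fin[OF u]] by blast
  moreover have "\<forall>g. Umap C X f u g \<noteq> 0 \<longrightarrow> g \<in> hom C X (Cod C f) \<and> g \<noteq> zmor C X (Cod C f)"
    unfolding Umap_def by auto
  ultimately show ?thesis unfolding UX_def by blast
qed

lemma LU: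
  assumes u: "u \<in> UX C X Z" and f: "Dom C f = Z" and z: "\<psi> (zmor C X (Cod C f)) = 0"
  shows "lin \<psi> (Umap C X f u) = lin (\<lambda>h. \<psi> (Comp C f h)) u"
proof -
  let ?S = "{h. u h \<noteq> 0}"
  let ?T = "(\<lambda>h. Comp C f h) ` ?S"
  have finS: "finite ?S" by (rule UX_fin[OF u])
  have sub: "{g. Umap C X f u g \<noteq> 0} \<subseteq> ?T" using Umap_supp by blast
  have "lin \<psi> (Umap C X f u) = (\<Sum>g\<in>?T. zsmul (Umap C X f u g) (\<psi> g))"
    by (rule lin_superset) (use finS sub in auto)
  also have "\<dots> = (\<Sum>g\<in>?T. \<Sum>h\<in>{h \<in> ?S. Comp C f h = g}. zsmul (u h) (\<psi> (Comp C f h)))"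
  proof (rule sum.cong[OF refl])
    fix g assume "g \<in> ?T"
    then obtain h0 where h0: "u h0 \<noteq> 0" "g = Comp C f h0" by blast
    have gh: "g \<in> hom C X (Cod C f)"
      using UX_hom[OF u h0(1)] f h0 by (simp add: hom_def dom_comp cod_comp)
    show "zsmul (Umap C X f u g) (\<psi> g) = (\<Sum>h\<in>{h \<in> ?S. Comp C f h = g}. zsmul (u h) (\<psi> (Comp C f h)))"
    proof (cases "g = zmor C X (Cod C f)")
      case True
      then show ?thesis using z by (simp add: sum.neutral)
    next
      case False
      have "Umap C X f u g = (\<Sum>h\<in>{h \<in> ?S. Comp C f h = g}. u h)"
        using gh False unfolding Umap_def by (simp add: conj_commute)
      then show ?thesis by (simp add: zsmul_sum_left)
    qed
  qed
  also have "\<dots> = (\<Sum>h\<in>?S. zsmul (u h) (\<psi> (Comp C f h)))"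
    by (rule sum.image_gen[OF finS, symmetric])
  also have "\<dots> = lin (\<lambda>h. \<psi> (Comp C f h)) u" by (simp add: lin_def)
  finally show ?thesis .
qed

lemma LU0:
  assumes u: "u \<in> UX C X Z" and f: "Dom C f = Z" and z: "\<psi> (zmor C X (Cod C f)) = 0"
    and k: "Umap C X f u = 0"
  shows "lin (\<lambda>h. \<psi> (Comp C f h)) u = 0"
proof -
  have "lin \<psi> (Umap C X f u) = lin (\<lambda>h. \<psi> (Comp C f h)) u" by (rule LU[OF u f, where \<psi>=\<psi>, OF z])
  then show ?thesis using k by simp
qed

lemma Umap_comp:
  assumes u: "u \<in> UX C X Z" and f: "Dom C f = Z" and g: "Dom C g = Cod C f"
  shows "Umap C X g (Umap C X f u) = Umap C X (Comp C g f) u"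
proof (rule ext)
  fix k
  have cgf: "Cod C (Comp C g f) = Cod C g" using g by (rule cod_comp)
  have fu: "finite {h. Umap C X f u h \<noteq> 0}" using UX_fin[OF Umap_UX[OF u f]] .
  show "Umap C X g (Umap C X f u) k = Umap C X (Comp C g f) u k"
  proof (cases "k \<in> hom C X (Cod C g) \<and> k \<noteq> zmor C X (Cod C g)")
    case True
    have "Umap C X g (Umap C X f u) k = lin (\<lambda>h'. if Comp C g h' = k then 1 else 0) (Umap C X f u)"
      using True by (simp add: Umap_eval[OF fu])
    also have "\<dots> = lin (\<lambda>h. if Comp C g (Comp C f h) = k then 1 else 0) u"
      by (rule LU[OF u f]) (use True g in \<open>auto simp add: zmor_left\<close>)
    also have "\<dots> = lin (\<lambda>h. if Comp C (Comp C g f) h = k then 1 else 0) u"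
      by (rule lin_cong) (use UX_hom[OF u] f g in \<open>simp add: assoc\<close>)
    also have "\<dots> = Umap C X (Comp C g f) u k"
      using True cgf by (simp add: Umap_eval[OF UX_fin[OF u]])
    finally show ?thesis .
  next
    case False
    then show ?thesis using cgf by (auto simp add: Umap_eval[OF fu] Umap_eval[OF UX_fin[OF u]])
  qed
qed


lemma kerU: assumes u: "u \<in> UX C X Z" and v: "v \<in> UX C X Z"
  and "Umap C X f u = 0" "Umap C X f v = 0"
  shows "Umap C X f (u + v) = 0" "Umap C X f (- u) = 0"
  using assms Umap_add[OF UX_fin[OF u] UX_fin[OF v]] Umap_uminus[OF UX_fin[OF u]] by simp_all

lemma UXc: "u \<in> UX C X Z \<Longrightarrow> v \<in> UX C X Z \<Longrightarrow> u + v \<in> UX C X Z"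
  "u \<in> UX C X Z \<Longrightarrow> - u \<in> UX C X Z" "0 \<in> UX C X Z"
  using UX_grp[of X Z] unfolding grp_def by blast+

lemma cr2U_grp: "grp (cr2U C X Y)"
  unfolding grp_def cr2U_def by (auto simp: UXc kerU)
lemma cr3U_grp: "grp (cr3U C X Y)"
  unfolding grp_def cr3U_def by (auto simp: UXc kerU)
lemma cr3U_right_grp: "grp (cr3U_right C X Y)"
  unfolding grp_def cr3U_right_def by (auto simp: UXc kerU)

lemma grpD: "grp S \<Longrightarrow> 0 \<in> S" "grp S \<Longrightarrow> x \<in> S \<Longrightarrow> y \<in> S \<Longrightarrow> x + y \<in> S"
  "grp S \<Longrightarrow> x \<in> S \<Longrightarrow> - x \<in> S"
  unfolding grp_def by blast+

lemma image_grp: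
  assumes S: "grp S" and SU: "S \<subseteq> UX C X Z"
  shows "grp (Umap C X f ` S)"
  unfolding grp_def
proof (intro conjI ballI)
  show "0 \<in> Umap C X f ` S" using grpD(1)[OF S] Umap_zero by (metis image_eqI)
next
  fix x y assume "x \<in> Umap C X f ` S" "y \<in> Umap C X f ` S"
  then obtain a b where ab: "a \<in> S" "b \<in> S" "x = Umap C X f a" "y = Umap C X f b" by blast
  have aU: "a \<in> UX C X Z" "b \<in> UX C X Z" using ab SU by auto
  then have "x + y = Umap C X f (a + b)"
    using Umap_add[OF UX_fin[OF aU(1)] UX_fin[OF aU(2)]] ab by simp
  moreover have "a + b \<in> S" using grpD(2)[OF S] ab by blast
  ultimately show "x + y \<in> Umap C X f ` S" by blast
next
  fix x assume "x \<in> Umap C X f ` S"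
  then obtain a where a: "a \<in> S" "x = Umap C X f a" by blast
  have aU: "a \<in> UX C X Z" using a SU by auto
  then have "- x = Umap C X f (- a)" using Umap_uminus[OF UX_fin[OF aU]] a by simp
  moreover have "- a \<in> S" using grpD(3)[OF S] a by blast
  ultimately show "- x \<in> Umap C X f ` S" by blast
qed

abbreviation "c1 Y \<equiv> cmap C (fold2 C Y) (Ident C Y)"
abbreviation "c2 Y \<equiv> cmap C (Ident C Y) (fold2 C Y)"

lemma c_typ: "Dom C (c1 Y) = Cop C (Cop C Y Y) Y" "Cod C (c1 Y) = Cop C Y Y"
  "Dom C (c2 Y) = Cop C Y (Cop C Y Y)" "Cod C (c2 Y) = Cop C Y Y"
  by (simp_all add: typs Ident_dom Ident_cod)

lemmas tys = typs Ident_dom Ident_cod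

lemma cr3U_UX: "a \<in> cr3U C X Y \<Longrightarrow> a \<in> UX C X (Cop C (Cop C Y Y) Y)"
  unfolding cr3U_def by blast
lemma cr3U_right_UX: "b \<in> cr3U_right C X Y \<Longrightarrow> b \<in> UX C X (Cop C Y (Cop C Y Y))"
  unfolding cr3U_right_def by blast

lemma mem1: assumes a: "a \<in> cr3U C X Y" shows "Umap C X (c1 Y) a \<in> cr2U C X Y"
proof -
  have aU: "a \<in> UX C X (Cop C (Cop C Y Y) Y)" using cr3U_UX[OF a] .
  have r1: "Umap C X (ret1 C (Cop C Y Y) Y) a = 0" "Umap C X (ret2 C (Cop C Y Y) Y) a = 0"
    using a unfolding cr3U_def by auto
  have "Umap C X (ret1 C Y Y) (Umap C X (c1 Y) a) = Umap C X (Comp C (ret1 C Y Y) (c1 Y)) a"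
    by (rule Umap_comp[OF aU]) (simp_all add: c_typ tys)
  also have "\<dots> = Umap C X (fold2 C Y) (Umap C X (ret1 C (Cop C Y Y) Y) a)"
    unfolding E2 by (rule Umap_comp[OF aU, symmetric]) (simp_all add: tys)
  also have "\<dots> = 0" using r1 by simp
  finally have A: "Umap C X (ret1 C Y Y) (Umap C X (c1 Y) a) = 0" .
  have "Umap C X (ret2 C Y Y) (Umap C X (c1 Y) a) = Umap C X (Comp C (ret2 C Y Y) (c1 Y)) a"
    by (rule Umap_comp[OF aU]) (simp_all add: c_typ tys)
  also have "\<dots> = 0" unfolding E3 using r1 by simp
  finally have B: "Umap C X (ret2 C Y Y) (Umap C X (c1 Y) a) = 0" .
  have "Umap C X (c1 Y) a \<in> UX C X (Cop C Y Y)"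
    using Umap_UX[OF aU, of "c1 Y"] by (simp add: c_typ Ident_dom Ident_cod)
  with A B show ?thesis unfolding cr2U_def by blast
qed

lemma mem2: assumes b: "b \<in> cr3U_right C X Y" shows "Umap C X (c2 Y) b \<in> cr2U C X Y"
proof -
  have bU: "b \<in> UX C X (Cop C Y (Cop C Y Y))" using cr3U_right_UX[OF b] .
  have r1: "Umap C X (ret1 C Y (Cop C Y Y)) b = 0" "Umap C X (ret2 C Y (Cop C Y Y)) b = 0"
    using b unfolding cr3U_right_def by auto
  have "Umap C X (ret1 C Y Y) (Umap C X (c2 Y) b) = Umap C X (Comp C (ret1 C Y Y) (c2 Y)) b"
    by (rule Umap_comp[OF bU]) (simp_all add: c_typ tys)
  also have "\<dots> = 0" unfolding E4 using r1 by simp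
  finally have A: "Umap C X (ret1 C Y Y) (Umap C X (c2 Y) b) = 0" .
  have "Umap C X (ret2 C Y Y) (Umap C X (c2 Y) b) = Umap C X (Comp C (ret2 C Y Y) (c2 Y)) b"
    by (rule Umap_comp[OF bU]) (simp_all add: c_typ tys)
  also have "\<dots> = Umap C X (fold2 C Y) (Umap C X (ret2 C Y (Cop C Y Y)) b)"
    unfolding E5 by (rule Umap_comp[OF bU, symmetric]) (simp_all add: tys)
  also have "\<dots> = 0" using r1 by simp
  finally have B: "Umap C X (ret2 C Y Y) (Umap C X (c2 Y) b) = 0" .
  have "Umap C X (c2 Y) b \<in> UX C X (Cop C Y Y)"
    using Umap_UX[OF bU, of "c2 Y"] by (simp add: c_typ Ident_dom Ident_cod)
  with A B show ?thesis unfolding cr2U_def by blast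
qed

lemma alpha_mem: assumes b: "b \<in> cr3U_right C X Y" shows "Umap C X (alpha Y) b \<in> cr3U C X Y"
proof -
  have bU: "b \<in> UX C X (Cop C Y (Cop C Y Y))" using cr3U_right_UX[OF b] .
  have r: "Umap C X (ret1 C Y (Cop C Y Y)) b = 0" "Umap C X (ret2 C Y (Cop C Y Y)) b = 0"
    "Umap C X (cmap C (Ident C Y) (ret1 C Y Y)) b = 0" "Umap C X (cmap C (Ident C Y) (ret2 C Y Y)) b = 0"
    using b unfolding cr3U_right_def by auto
  have A: "Umap C X (ret1 C (Cop C Y Y) Y) (Umap C X (alpha Y) b) = 0"
    using Umap_comp[OF bU, of "alpha Y" "ret1 C (Cop C Y Y) Y"] r by (simp add: tys E8)
  have "Umap C X (ret2 C (Cop C Y Y) Y) (Umap C X (alpha Y) b) = Umap C X (Comp C (ret2 C Y Y) (ret2 C Y (Cop C Y Y))) b"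
    using Umap_comp[OF bU, of "alpha Y" "ret2 C (Cop C Y Y) Y"] by (simp add: tys E9)
  also have "\<dots> = 0"
    using Umap_comp[OF bU, of "ret2 C Y (Cop C Y Y)" "ret2 C Y Y"] r by (simp add: tys)
  finally have B: "Umap C X (ret2 C (Cop C Y Y) Y) (Umap C X (alpha Y) b) = 0" .
  have D: "Umap C X (cmap C (ret1 C Y Y) (Ident C Y)) (Umap C X (alpha Y) b) = 0"
    using Umap_comp[OF bU, of "alpha Y" "cmap C (ret1 C Y Y) (Ident C Y)"] r
    by (simp add: tys E10 Ident_dom Ident_cod)
  have E: "Umap C X (cmap C (ret2 C Y Y) (Ident C Y)) (Umap C X (alpha Y) b) = 0"
    using Umap_comp[OF bU, of "alpha Y" "cmap C (ret2 C Y Y) (Ident C Y)"] r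
    by (simp add: tys E11 Ident_dom Ident_cod)
  have "Umap C X (alpha Y) b \<in> UX C X (Cop C (Cop C Y Y) Y)"
    using Umap_UX[OF bU, of "alpha Y"] by (simp add: tys)
  with A B D E show ?thesis unfolding cr3U_def by blast
qed

lemma linext_eq: "linext C X Y \<phi> = lin \<phi>"
  by (rule ext) (simp add: linext_def lin_def)
lemma cr2phi_eq: "cr2phi C X Y \<phi> = lin (\<lambda>\<xi>. \<phi> (Comp C (fold2 C Y) \<xi>) - \<phi> (Comp C (ret1 C Y Y) \<xi>) - \<phi> (Comp C (ret2 C Y Y) \<xi>))"
  by (rule ext) (simp add: cr2phi_def lin_def)

lemma chi0: fixes \<phi> :: "'m \<Rightarrow> 'a::ab_group_add" assumes "\<phi> (zmor C X Y) = 0"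
  shows "(\<lambda>\<xi>. \<phi> (Comp C (fold2 C Y) \<xi>) - \<phi> (Comp C (ret1 C Y Y) \<xi>) - \<phi> (Comp C (ret2 C Y Y) \<xi>)) (zmor C X (Cop C Y Y)) = 0"
  using assms by (simp add: zmor_left tys)

lemma K1: assumes a: "a \<in> cr3U C X Y" and z: "\<phi> (zmor C X Y) = 0"
  shows "cr2phi C X Y \<phi> (Umap C X (c1 Y) a) = linext C X Y \<phi> (Umap C X (fold3 C Y) a)"
proof -
  have aU: "a \<in> UX C X (Cop C (Cop C Y Y) Y)" using cr3U_UX[OF a] .
  have r1: "Umap C X (ret1 C (Cop C Y Y) Y) a = 0" "Umap C X (ret2 C (Cop C Y Y) Y) a = 0"
    using a unfolding cr3U_def by auto
  let ?chi = "\<lambda>\<xi>. \<phi> (Comp C (fold2 C Y) \<xi>) - \<phi> (Comp C (ret1 C Y Y) \<xi>) - \<phi> (Comp C (ret2 C Y Y) \<xi>)"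
  have "cr2phi C X Y \<phi> (Umap C X (c1 Y) a) = lin ?chi (Umap C X (c1 Y) a)" by (simp add: cr2phi_eq)
  also have "\<dots> = lin (\<lambda>h. ?chi (Comp C (c1 Y) h)) a"
    by (rule LU[OF aU]) (use chi0[where \<phi>=\<phi>, OF z] in \<open>simp_all add: c_typ\<close>)
  also have "\<dots> = lin (\<lambda>h. \<phi> (Comp C (fold3 C Y) h) - \<phi> (Comp C (fold2 C Y) (Comp C (ret1 C (Cop C Y Y) Y) h))
         - \<phi> (Comp C (ret2 C (Cop C Y Y) Y) h)) a"
  proof (rule lin_cong)
    fix h assume "a h \<noteq> 0"
    then have h: "Cod C h = Cop C (Cop C Y Y) Y" using UX_hom[OF aU] by blast
    have 1: "Comp C (fold2 C Y) (Comp C (c1 Y) h) = Comp C (fold3 C Y) h"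
      using h by (simp add: assoc c_typ tys E1)
    have 2: "Comp C (ret1 C Y Y) (Comp C (c1 Y) h) = Comp C (fold2 C Y) (Comp C (ret1 C (Cop C Y Y) Y) h)"
      using h assoc[of "c1 Y" h "ret1 C Y Y"] assoc[of "ret1 C (Cop C Y Y) Y" h "fold2 C Y"]
      by (simp add: c_typ tys E2)
    have 3: "Comp C (ret2 C Y Y) (Comp C (c1 Y) h) = Comp C (ret2 C (Cop C Y Y) Y) h"
      using h by (simp add: assoc c_typ tys E3)
    show "?chi (Comp C (c1 Y) h) = \<phi> (Comp C (fold3 C Y) h) - \<phi> (Comp C (fold2 C Y) (Comp C (ret1 C (Cop C Y Y) Y) h))
         - \<phi> (Comp C (ret2 C (Cop C Y Y) Y) h)" using 1 2 3 by simp
  qed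
  also have "\<dots> = lin (\<lambda>h. \<phi> (Comp C (fold3 C Y) h)) a
      - lin (\<lambda>h. \<phi> (Comp C (fold2 C Y) (Comp C (ret1 C (Cop C Y Y) Y) h))) a
      - lin (\<lambda>h. \<phi> (Comp C (ret2 C (Cop C Y Y) Y) h)) a"
    by (simp add: lin_diff_fun)
  also have "lin (\<lambda>h. \<phi> (Comp C (fold2 C Y) (Comp C (ret1 C (Cop C Y Y) Y) h))) a = 0"
    by (rule LU0[OF aU, where \<psi>="\<lambda>g. \<phi> (Comp C (fold2 C Y) g)"]) (use z r1 in \<open>simp_all add: tys zmor_left\<close>)
  also have "lin (\<lambda>h. \<phi> (Comp C (ret2 C (Cop C Y Y) Y) h)) a = 0"
    by (rule LU0[OF aU]) (use z r1 in \<open>simp_all add: tys\<close>)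
  also have "lin (\<lambda>h. \<phi> (Comp C (fold3 C Y) h)) a = lin \<phi> (Umap C X (fold3 C Y) a)"
    by (rule LU[OF aU, symmetric]) (use z in \<open>simp_all add: tys\<close>)
  finally show ?thesis by (simp add: linext_eq)
qed

lemma K2: assumes b: "b \<in> cr3U_right C X Y" and z: "\<phi> (zmor C X Y) = 0"
  shows "cr2phi C X Y \<phi> (Umap C X (c2 Y) b) = linext C X Y \<phi> (Umap C X (fold3 C Y) (Umap C X (alpha Y) b))"
proof -
  have bU: "b \<in> UX C X (Cop C Y (Cop C Y Y))" using cr3U_right_UX[OF b] .
  have r1: "Umap C X (ret1 C Y (Cop C Y Y)) b = 0" "Umap C X (ret2 C Y (Cop C Y Y)) b = 0"
    using b unfolding cr3U_right_def by auto
  let ?chi = "\<lambda>\<xi>. \<phi> (Comp C (fold2 C Y) \<xi>) - \<phi> (Comp C (ret1 C Y Y) \<xi>) - \<phi> (Comp C (ret2 C Y Y) \<xi>)"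
  have "cr2phi C X Y \<phi> (Umap C X (c2 Y) b) = lin ?chi (Umap C X (c2 Y) b)" by (simp add: cr2phi_eq)
  also have "\<dots> = lin (\<lambda>h. ?chi (Comp C (c2 Y) h)) b"
    by (rule LU[OF bU]) (use chi0[where \<phi>=\<phi>, OF z] in \<open>simp_all add: c_typ\<close>)
  also have "\<dots> = lin (\<lambda>h. \<phi> (Comp C (fold3 C Y) (Comp C (alpha Y) h)) - \<phi> (Comp C (ret1 C Y (Cop C Y Y)) h)
         - \<phi> (Comp C (fold2 C Y) (Comp C (ret2 C Y (Cop C Y Y)) h))) b"
  proof (rule lin_cong)
    fix h assume "b h \<noteq> 0"
    then have h: "Cod C h = Cop C Y (Cop C Y Y)" using UX_hom[OF bU] by blast
    have 1: "Comp C (fold2 C Y) (Comp C (c2 Y) h) = Comp C (fold3 C Y) (Comp C (alpha Y) h)"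
      using h assoc[of "c2 Y" h "fold2 C Y"] assoc[of "alpha Y" h "fold3 C Y"]
      by (simp add: c_typ tys E7)
    have 2: "Comp C (ret1 C Y Y) (Comp C (c2 Y) h) = Comp C (ret1 C Y (Cop C Y Y)) h"
      using h by (simp add: assoc c_typ tys E4)
    have 3: "Comp C (ret2 C Y Y) (Comp C (c2 Y) h) = Comp C (fold2 C Y) (Comp C (ret2 C Y (Cop C Y Y)) h)"
      using h assoc[of "c2 Y" h "ret2 C Y Y"] assoc[of "ret2 C Y (Cop C Y Y)" h "fold2 C Y"]
      by (simp add: c_typ tys E5)
    show "?chi (Comp C (c2 Y) h) = \<phi> (Comp C (fold3 C Y) (Comp C (alpha Y) h)) - \<phi> (Comp C (ret1 C Y (Cop C Y Y)) h)
         - \<phi> (Comp C (fold2 C Y) (Comp C (ret2 C Y (Cop C Y Y)) h))" using 1 2 3 by simp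
  qed
  also have "\<dots> = lin (\<lambda>h. \<phi> (Comp C (fold3 C Y) (Comp C (alpha Y) h))) b
      - lin (\<lambda>h. \<phi> (Comp C (ret1 C Y (Cop C Y Y)) h)) b
      - lin (\<lambda>h. \<phi> (Comp C (fold2 C Y) (Comp C (ret2 C Y (Cop C Y Y)) h))) b"
    by (simp add: lin_diff_fun)
  also have "lin (\<lambda>h. \<phi> (Comp C (fold2 C Y) (Comp C (ret2 C Y (Cop C Y Y)) h))) b = 0"
    by (rule LU0[OF bU, where \<psi>="\<lambda>g. \<phi> (Comp C (fold2 C Y) g)"]) (use z r1 in \<open>simp_all add: tys zmor_left\<close>)
  also have "lin (\<lambda>h. \<phi> (Comp C (ret1 C Y (Cop C Y Y)) h)) b = 0"
    by (rule LU0[OF bU]) (use z r1 in \<open>simp_all add: tys\<close>)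
  also have "lin (\<lambda>h. \<phi> (Comp C (fold3 C Y) (Comp C (alpha Y) h))) b
      = lin (\<lambda>g. \<phi> (Comp C (fold3 C Y) g)) (Umap C X (alpha Y) b)"
    by (rule LU[OF bU, symmetric]) (use z in \<open>simp_all add: tys zmor_left\<close>)
  also have "\<dots> = lin \<phi> (Umap C X (fold3 C Y) (Umap C X (alpha Y) b))"
    by (rule LU[OF cr3U_UX[OF alpha_mem[OF b]], symmetric]) (use z in \<open>simp_all add: tys\<close>)
  finally show ?thesis by (simp add: linext_eq)
qed


lemma T11_parts: "T11ker C X Y = {a + b | a b. a \<in> Umap C X (c1 Y) ` cr3U C X Y \<and> b \<in> Umap C X (c2 Y) ` cr3U_right C X Y}"
  unfolding T11ker_def ..

lemma I1: "grp (Umap C X (c1 Y) ` cr3U C X Y)" "Umap C X (c1 Y) ` cr3U C X Y \<subseteq> cr2U C X Y"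
proof -
  have "cr3U C X Y \<subseteq> UX C X (Cop C (Cop C Y Y) Y)" using cr3U_UX by blast
  then show "grp (Umap C X (c1 Y) ` cr3U C X Y)" by (rule image_grp[OF cr3U_grp])
  show "Umap C X (c1 Y) ` cr3U C X Y \<subseteq> cr2U C X Y" using mem1 by blast
qed
lemma I2: "grp (Umap C X (c2 Y) ` cr3U_right C X Y)" "Umap C X (c2 Y) ` cr3U_right C X Y \<subseteq> cr2U C X Y"
proof -
  have "cr3U_right C X Y \<subseteq> UX C X (Cop C Y (Cop C Y Y))" using cr3U_right_UX by blast
  then show "grp (Umap C X (c2 Y) ` cr3U_right C X Y)" by (rule image_grp[OF cr3U_right_grp])
  show "Umap C X (c2 Y) ` cr3U_right C X Y \<subseteq> cr2U C X Y" using mem2 by blast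
qed

lemma sum_grp:
  assumes A: "grp A" and B: "grp B"
  shows "grp {a + b | a b. a \<in> A \<and> b \<in> B}"
  unfolding grp_def
proof (intro conjI ballI)
  show "0 \<in> {a + b | a b. a \<in> A \<and> b \<in> B}" using grpD(1)[OF A] grpD(1)[OF B] by force
next
  fix x y assume "x \<in> {a + b | a b. a \<in> A \<and> b \<in> B}" "y \<in> {a + b | a b. a \<in> A \<and> b \<in> B}"
  then obtain a b a' b' where ab: "x = a + b" "a \<in> A" "b \<in> B" "y = a' + b'" "a' \<in> A" "b' \<in> B" by blast
  then have "x + y = (a + a') + (b + b')" by (simp add: algebra_simps)
  moreover have "a + a' \<in> A" "b + b' \<in> B" using grpD(2)[OF A] grpD(2)[OF B] ab by blast+
  ultimately show "x + y \<in> {a + b | a b. a \<in> A \<and> b \<in> B}" by blast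
next
  fix x assume "x \<in> {a + b | a b. a \<in> A \<and> b \<in> B}"
  then obtain a b where ab: "x = a + b" "a \<in> A" "b \<in> B" by blast
  then have "- x = (- a) + (- b)" by simp
  moreover have "- a \<in> A" "- b \<in> B" using grpD(3)[OF A] grpD(3)[OF B] ab by blast+
  ultimately show "- x \<in> {a + b | a b. a \<in> A \<and> b \<in> B}" by blast
qed

lemma T11_grp: "grp (T11ker C X Y)"
  unfolding T11_parts by (rule sum_grp[OF I1(1) I2(1)])

lemma T11_sub: "T11ker C X Y \<subseteq> cr2U C X Y"
proof
  fix n assume "n \<in> T11ker C X Y"
  then obtain a b where ab: "n = a + b" "a \<in> Umap C X (c1 Y) ` cr3U C X Y" "b \<in> Umap C X (c2 Y) ` cr3U_right C X Y"
    unfolding T11_parts by blast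
  then have "a \<in> cr2U C X Y" "b \<in> cr2U C X Y" using I1(2) I2(2) by blast+
  then show "n \<in> cr2U C X Y" using grpD(2)[OF cr2U_grp] ab(1) by blast
qed

lemma cr2U_UX: "u \<in> cr2U C X Y \<Longrightarrow> u \<in> UX C X (Cop C Y Y)"
  unfolding cr2U_def by blast

lemma T2_grp: "grp (T2ker C X Y)"
proof -
  have "cr3U C X Y \<subseteq> UX C X (Cop C (Cop C Y Y) Y)" using cr3U_UX by blast
  then show ?thesis unfolding T2ker_def by (rule image_grp[OF cr3U_grp])
qed
lemma T2_sub: "T2ker C X Y \<subseteq> UX C X Y"
proof
  fix n assume "n \<in> T2ker C X Y"
  then obtain a where a: "a \<in> cr3U C X Y" "n = Umap C X (fold3 C Y) a" unfolding T2ker_def by blast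
  have "Umap C X (fold3 C Y) a \<in> UX C X (Cod C (fold3 C Y))"
    by (rule Umap_UX[OF cr3U_UX[OF a(1)]]) (simp add: tys)
  then show "n \<in> UX C X Y" using a(2) by (simp add: tys)
qed

theorem main:
  fixes \<phi> :: "'m \<Rightarrow> 'a::ab_group_add"
  assumes z: "\<phi> (zmor C X Y) = 0"
  shows "quadratic C X Y \<phi> \<longleftrightarrow>
         factors_through_quot (UX C X Y) (T2ker C X Y) (linext C X Y \<phi>)"
proof -
  have Q: "quadratic C X Y \<phi> \<longleftrightarrow> (\<forall>n\<in>T11ker C X Y. cr2phi C X Y \<phi> n = 0)"
    unfolding quadratic_def
  proof (rule ftq[OF cr2U_grp T11_grp T11_sub])
    fix u v assume uv: "u \<in> cr2U C X Y" "v \<in> cr2U C X Y"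
    show "cr2phi C X Y \<phi> (u + v) = cr2phi C X Y \<phi> u + cr2phi C X Y \<phi> v"
      unfolding cr2phi_eq by (rule lin_add[OF UX_fin[OF cr2U_UX[OF uv(1)]] UX_fin[OF cr2U_UX[OF uv(2)]]])
  qed
  have F: "factors_through_quot (UX C X Y) (T2ker C X Y) (linext C X Y \<phi>) \<longleftrightarrow>
      (\<forall>n\<in>T2ker C X Y. linext C X Y \<phi> n = 0)"
  proof (rule ftq[OF UX_grp T2_grp T2_sub])
    fix u v assume uv: "u \<in> UX C X Y" "v \<in> UX C X Y"
    show "linext C X Y \<phi> (u + v) = linext C X Y \<phi> u + linext C X Y \<phi> v"
      unfolding linext_eq by (rule lin_add[OF UX_fin[OF uv(1)] UX_fin[OF uv(2)]])
  qed
  have "(\<forall>n\<in>T11ker C X Y. cr2phi C X Y \<phi> n = 0) \<longleftrightarrow> (\<forall>n\<in>T2ker C X Y. linext C X Y \<phi> n = 0)"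
  proof
    assume H: "\<forall>n\<in>T11ker C X Y. cr2phi C X Y \<phi> n = 0"
    show "\<forall>n\<in>T2ker C X Y. linext C X Y \<phi> n = 0"
    proof
      fix n assume "n \<in> T2ker C X Y"
      then obtain a where a: "a \<in> cr3U C X Y" "n = Umap C X (fold3 C Y) a" unfolding T2ker_def by blast
      have "0 \<in> cr3U_right C X Y" using grpD(1)[OF cr3U_right_grp] .
      then have "Umap C X (c1 Y) a + Umap C X (c2 Y) 0 \<in> T11ker C X Y"
        unfolding T11_parts using a(1) by blast
      then have "cr2phi C X Y \<phi> (Umap C X (c1 Y) a) = 0" using H by simp
      then show "linext C X Y \<phi> n = 0" using K1[OF a(1), where \<phi>=\<phi>, OF z] a(2) by simp
    qed
  next
    assume H: "\<forall>n\<in>T2ker C X Y. linext C X Y \<phi> n = 0"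
    show "\<forall>n\<in>T11ker C X Y. cr2phi C X Y \<phi> n = 0"
    proof
      fix n assume "n \<in> T11ker C X Y"
      then obtain a b where ab: "a \<in> cr3U C X Y" "b \<in> cr3U_right C X Y"
        "n = Umap C X (c1 Y) a + Umap C X (c2 Y) b" unfolding T11_parts by blast
      have m: "Umap C X (c1 Y) a \<in> UX C X (Cop C Y Y)" "Umap C X (c2 Y) b \<in> UX C X (Cop C Y Y)"
        using mem1[OF ab(1)] mem2[OF ab(2)] cr2U_UX by blast+
      have "cr2phi C X Y \<phi> n = cr2phi C X Y \<phi> (Umap C X (c1 Y) a) + cr2phi C X Y \<phi> (Umap C X (c2 Y) b)"
        unfolding ab(3) cr2phi_eq by (rule lin_add[OF UX_fin[OF m(1)] UX_fin[OF m(2)]])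
      also have "\<dots> = linext C X Y \<phi> (Umap C X (fold3 C Y) a)
          + linext C X Y \<phi> (Umap C X (fold3 C Y) (Umap C X (alpha Y) b))"
        using K1[OF ab(1), where \<phi>=\<phi>, OF z] K2[OF ab(2), where \<phi>=\<phi>, OF z] by simp
      also have "\<dots> = 0"
        using H ab alpha_mem[OF ab(2)] unfolding T2ker_def by simp
      finally show "cr2phi C X Y \<phi> n = 0" .
    qed
  qed
  then show ?thesis using Q F by simp
qed
end

theorem proposition2p10:
  fixes C :: "('o, 'm) pcat" and X Y :: 'o and \<phi> :: "'m \<Rightarrow> 'a::ab_group_add"
  assumes "pointed_cat_cop C"
    and "\<phi> (zmor C X Y) = 0"
  shows "quadratic C X Y \<phi> \<longleftrightarrow>
         factors_through_quot (UX C X Y) (T2ker C X Y) (linext C X Y \<phi>)"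
proof -
  interpret pcc C by (rule pcc.intro) (rule assms(1))
  show ?thesis by (rule main[where \<phi>=\<phi>, OF assms(2)])
qed

end
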